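(* Let $t_1,x_1,t_2,x_2,b$ satisfy $0<t_1<t_2$, $\frac{x_1}{t_1}>\frac{x_2}{t_2}$, $0\le b\le\frac{(x_2-x_1)^2}{t_2-t_1}+\frac{x_1^2}{t_1}-\frac{x_2^2}{t_2}$. Let $(F,\rho)$ be a feasible pair minimizing $I_2$, with $F$ concave, $F'(t)\le\frac{F(t)}{t}$ on $[t_1,t_2]$, and $\rho$ nonincreasing, and let $g=g(F,\rho,b)$. If $g=0$ on an interval $[s_1,s_2]\subset[t_1,t_2]$, then $F'$ and $\rho$ are absolutely continuous on $[s_1,s_2]$.
   Context: A pair $(F,\rho)$ is feasible if $F:[t_1,t_2]\to\mathbb R$ is absolutely continuous with $F(t_1)=x_1$, $F(t_2)=x_2$, $\rho:[t_1,t_2]\to[0,\infty)$ is Lebesgue measurable, and $g(F,\rho,b)(t):=b-\frac{F(t_1)^2}{t_1}+\int_{t_1}^t(\rho(\tau)-F'(\tau)^2)d\tau+\frac{F(t)^2}{t}\ge0$ for all $t\in[t_1,t_2]$. $I_2(F,\rho)=\frac43\int_{t_1}^{t_2}\rho^{3/2}dt$. *)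

theory Defs
  imports "HOL-Analysis.Analysis"
begin

definition abs_cont_on :: "real set \<Rightarrow> (real \<Rightarrow> real) \<Rightarrow> bool" where
  "abs_cont_on S f \<longleftrightarrow>
     (\<forall>e>0. \<exists>d>0. \<forall>(n::nat) a b.
        (\<forall>i<n. a i \<le> b i \<and> a i \<in> S \<and> b i \<in> S) \<and>
        (\<forall>i<n. \<forall>j<n. i \<noteq> j \<longrightarrow> b i \<le> a j \<or> b j \<le> a i) \<and>
        (\<Sum>i<n. b i - a i) < d
        \<longrightarrow> (\<Sum>i<n. \<bar>f (b i) - f (a i)\<bar>) < e)"

definition gfun :: "real \<Rightarrow> (real \<Rightarrow> real) \<Rightarrow> (real \<Rightarrow> real) \<Rightarrow> real \<Rightarrow> real \<Rightarrow> real" where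
  "gfun t1 F \<rho> b t =
     b - (F t1)\<^sup>2 / t1 + (LINT \<tau>:{t1..t}|lebesgue. \<rho> \<tau> - (deriv F \<tau>)\<^sup>2) + (F t)\<^sup>2 / t"

definition feasible :: "real \<Rightarrow> real \<Rightarrow> real \<Rightarrow> real \<Rightarrow> real \<Rightarrow> (real \<Rightarrow> real) \<Rightarrow> (real \<Rightarrow> real) \<Rightarrow> bool" where
  "feasible t1 x1 t2 x2 b F \<rho> \<longleftrightarrow>
     abs_cont_on {t1..t2} F \<and> F t1 = x1 \<and> F t2 = x2 \<and>
     (\<forall>t\<in>{t1..t2}. 0 \<le> \<rho> t) \<and>
     \<rho> \<in> borel_measurable (lebesgue_on {t1..t2}) \<and>
     set_integrable lebesgue {t1..t2} (\<lambda>\<tau>. \<rho> \<tau> - (deriv F \<tau>)\<^sup>2) \<and>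
     (\<forall>t\<in>{t1..t2}. gfun t1 F \<rho> b t \<ge> 0)"

definition I2 :: "real \<Rightarrow> real \<Rightarrow> (real \<Rightarrow> real) \<Rightarrow> ennreal" where
  "I2 t1 t2 \<rho> = ennreal (4/3) * (\<integral>\<^sup>+ t\<in>{t1..t2}. ennreal (\<rho> t powr (3/2)) \<partial>lebesgue)"

end

theory Submission
  imports Defs
begin

lemma abs_contD:
  assumes "abs_cont_on S f" "e > 0"
  obtains d where "d > 0" "\<And>(n::nat) a b. (\<forall>i<n. a i \<le> b i \<and> a i \<in> S \<and> b i \<in> S) \<and>
        (\<forall>i<n. \<forall>j<n. i \<noteq> j \<longrightarrow> b i \<le> a j \<or> b j \<le> a i) \<and>
        (\<Sum>i<n. b i - a i) < d \<Longrightarrow> (\<Sum>i<n. \<bar>f (b i) - f (a i)\<bar>) < e"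
proof -
  from assms(1)[unfolded abs_cont_on_def, rule_format, OF assms(2)]
  obtain d where d: "d > 0" "\<forall>(n::nat) a b. (\<forall>i<n. a i \<le> b i \<and> a i \<in> S \<and> b i \<in> S) \<and>
        (\<forall>i<n. \<forall>j<n. i \<noteq> j \<longrightarrow> b i \<le> a j \<or> b j \<le> a i) \<and>
        (\<Sum>i<n. b i - a i) < d \<longrightarrow> (\<Sum>i<n. \<bar>f (b i) - f (a i)\<bar>) < e"
    by (elim exE conjE) (rule that, assumption+)
  show ?thesis
    by (rule that[OF d(1)], rule d(2)[rule_format])
qed

lemma abs_contI:
  assumes "\<And>e. e > 0 \<Longrightarrow> \<exists>d>0. \<forall>(n::nat) a b. (\<forall>i<n. a i \<le> b i \<and> a i \<in> S \<and> b i \<in> S) \<and>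
        (\<forall>i<n. \<forall>j<n. i \<noteq> j \<longrightarrow> b i \<le> a j \<or> b j \<le> a i) \<and>
        (\<Sum>i<n. b i - a i) < d \<longrightarrow> (\<Sum>i<n. \<bar>f (b i) - f (a i)\<bar>) < e"
  shows "abs_cont_on S f"
  unfolding abs_cont_on_def using assms by (intro allI impI)

lemma abs_cont_on_subset:
  assumes "abs_cont_on T f" "S \<subseteq> T" shows "abs_cont_on S f"
proof (rule abs_contI)
  fix e :: real assume "e > 0"
  then obtain d where d: "d > 0" and H: "\<And>(n::nat) a b. (\<forall>i<n. a i \<le> b i \<and> a i \<in> T \<and> b i \<in> T) \<and>
        (\<forall>i<n. \<forall>j<n. i \<noteq> j \<longrightarrow> b i \<le> a j \<or> b j \<le> a i) \<and>
        (\<Sum>i<n. b i - a i) < d \<Longrightarrow> (\<Sum>i<n. \<bar>f (b i) - f (a i)\<bar>) < e"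
    using abs_contD[OF assms(1)] by blast
  show "\<exists>d>0. \<forall>(n::nat) a b. (\<forall>i<n. a i \<le> b i \<and> a i \<in> S \<and> b i \<in> S) \<and>
        (\<forall>i<n. \<forall>j<n. i \<noteq> j \<longrightarrow> b i \<le> a j \<or> b j \<le> a i) \<and>
        (\<Sum>i<n. b i - a i) < d \<longrightarrow> (\<Sum>i<n. \<bar>f (b i) - f (a i)\<bar>) < e"
  proof (intro exI[of _ d] conjI allI impI)
    fix n :: nat and a b assume P: "(\<forall>i<n. a i \<le> b i \<and> a i \<in> S \<and> b i \<in> S) \<and>
        (\<forall>i<n. \<forall>j<n. i \<noteq> j \<longrightarrow> b i \<le> a j \<or> b j \<le> a i) \<and>
        (\<Sum>i<n. b i - a i) < d"
    then have "\<forall>i<n. a i \<le> b i \<and> a i \<in> T \<and> b i \<in> T" using assms(2) by auto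
    with P show "(\<Sum>i<n. \<bar>f (b i) - f (a i)\<bar>) < e" by (intro H) simp
  qed (rule d)
qed


lemma abs_cont_on_dominated:
  assumes g: "abs_cont_on S g" and A: "A \<ge> 0" and B: "B \<ge> 0"
    and le: "\<And>x y. x \<in> S \<Longrightarrow> y \<in> S \<Longrightarrow> \<bar>f x - f y\<bar> \<le> A * \<bar>g x - g y\<bar> + B * \<bar>x - y\<bar>"
  shows "abs_cont_on S f"
proof (rule abs_contI)
  fix e :: real assume e: "e > 0"
  have e1: "e / (2 * (A + 1)) > 0" using e A by simp
  obtain d1 where d1: "d1 > 0" and H: "\<And>(n::nat) a b. (\<forall>i<n. a i \<le> b i \<and> a i \<in> S \<and> b i \<in> S) \<and>
        (\<forall>i<n. \<forall>j<n. i \<noteq> j \<longrightarrow> b i \<le> a j \<or> b j \<le> a i) \<and>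
        (\<Sum>i<n. b i - a i) < d1 \<Longrightarrow> (\<Sum>i<n. \<bar>g (b i) - g (a i)\<bar>) < e / (2 * (A + 1))"
    using abs_contD[OF g e1] by blast
  define d where "d = min d1 (e / (2 * (B + 1)))"
  have dpos: "d > 0" using d1 e B by (simp add: d_def)
  show "\<exists>d>0. \<forall>(n::nat) a b. (\<forall>i<n. a i \<le> b i \<and> a i \<in> S \<and> b i \<in> S) \<and>
        (\<forall>i<n. \<forall>j<n. i \<noteq> j \<longrightarrow> b i \<le> a j \<or> b j \<le> a i) \<and>
        (\<Sum>i<n. b i - a i) < d \<longrightarrow> (\<Sum>i<n. \<bar>f (b i) - f (a i)\<bar>) < e"
  proof (intro exI[of _ d] conjI allI impI)
    fix n :: nat and a b assume P: "(\<forall>i<n. a i \<le> b i \<and> a i \<in> S \<and> b i \<in> S) \<and>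
        (\<forall>i<n. \<forall>j<n. i \<noteq> j \<longrightarrow> b i \<le> a j \<or> b j \<le> a i) \<and>
        (\<Sum>i<n. b i - a i) < d"
    have "(\<Sum>i<n. b i - a i) < d1" using P by (simp add: d_def)
    with P have Hg: "(\<Sum>i<n. \<bar>g (b i) - g (a i)\<bar>) < e / (2 * (A + 1))" by (intro H) simp
    have Hl: "(\<Sum>i<n. b i - a i) < e / (2 * (B + 1))" using P by (simp add: d_def)
    have "(\<Sum>i<n. \<bar>f (b i) - f (a i)\<bar>) \<le> (\<Sum>i<n. A * \<bar>g (b i) - g (a i)\<bar> + B * (b i - a i))"
    proof (rule sum_mono)
      fix i assume "i \<in> {..<n}"
      then have "a i \<le> b i" "a i \<in> S" "b i \<in> S" using P by auto
      then show "\<bar>f (b i) - f (a i)\<bar> \<le> A * \<bar>g (b i) - g (a i)\<bar> + B * (b i - a i)"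
        using le[of "b i" "a i"] by simp
    qed
    also have "\<dots> = A * (\<Sum>i<n. \<bar>g (b i) - g (a i)\<bar>) + B * (\<Sum>i<n. b i - a i)"
      by (simp add: sum.distrib sum_distrib_left)
    also have "\<dots> \<le> A * (e / (2 * (A + 1))) + B * (e / (2 * (B + 1)))"
      by (intro add_mono mult_left_mono) (use Hg Hl A B in auto)
    also have "\<dots> < e"
    proof -
      have "A * (e / (2 * (A + 1))) < e/2" using A e by (simp add: field_simps)
      moreover have "B * (e / (2 * (B + 1))) < e/2" using B e by (simp add: field_simps)
      ultimately show ?thesis by linarith
    qed
    finally show "(\<Sum>i<n. \<bar>f (b i) - f (a i)\<bar>) < e" .
  qed (rule dpos)
qed

lemma abs_cont_imp_continuous:
  assumes "abs_cont_on S f" shows "continuous_on S f"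
  unfolding continuous_on_iff
proof (intro ballI allI impI)
  fix x e assume x: "x \<in> S" and e: "(e::real) > 0"
  obtain d where d: "d > 0" and H: "\<And>(n::nat) a b. (\<forall>i<n. a i \<le> b i \<and> a i \<in> S \<and> b i \<in> S) \<and>
        (\<forall>i<n. \<forall>j<n. i \<noteq> j \<longrightarrow> b i \<le> a j \<or> b j \<le> a i) \<and>
        (\<Sum>i<n. b i - a i) < d \<Longrightarrow> (\<Sum>i<n. \<bar>f (b i) - f (a i)\<bar>) < e"
    using abs_contD[OF assms e] by blast
  have "dist (f y) (f x) < e" if y: "y \<in> S" "dist y x < d" for y
  proof -
    have "(\<Sum>i<(1::nat). \<bar>f ((\<lambda>_. max x y) i) - f ((\<lambda>_. min x y) i)\<bar>) < e"
      by (rule H) (use x y in \<open>auto simp: dist_real_def min_def max_def\<close>)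
    then show ?thesis by (auto simp: dist_real_def max_def min_def abs_minus_commute split: if_splits)
  qed
  then show "\<exists>d>0. \<forall>y\<in>S. dist y x < d \<longrightarrow> dist (f y) (f x) < e" using d by blast
qed

lemma abs_cont_singleton: "abs_cont_on {s} f"
proof (rule abs_contI)
  fix e :: real assume e: "e > 0"
  show "\<exists>d>0. \<forall>(n::nat) a b. (\<forall>i<n. a i \<le> b i \<and> a i \<in> {s} \<and> b i \<in> {s}) \<and>
        (\<forall>i<n. \<forall>j<n. i \<noteq> j \<longrightarrow> b i \<le> a j \<or> b j \<le> a i) \<and>
        (\<Sum>i<n. b i - a i) < d \<longrightarrow> (\<Sum>i<n. \<bar>f (b i) - f (a i)\<bar>) < e"
  proof (intro exI[of _ 1] conjI allI impI)
    fix n :: nat and a b assume P: "(\<forall>i<n. a i \<le> b i \<and> a i \<in> {s} \<and> b i \<in> {s}) \<and>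
        (\<forall>i<n. \<forall>j<n. i \<noteq> j \<longrightarrow> b i \<le> a j \<or> b j \<le> a i) \<and>
        (\<Sum>i<n. b i - a i) < 1"
    have "(\<Sum>i<n. \<bar>f (b i) - f (a i)\<bar>) = (\<Sum>i<n. 0)"
      by (rule sum.cong) (use P in auto)
    then show "(\<Sum>i<n. \<bar>f (b i) - f (a i)\<bar>) < e" using e by simp
  qed simp
qed

lemma concave_tangent:
  fixes F :: "real \<Rightarrow> real"
  assumes conc: "concave_on {a..b} F" and c: "a < c" "c < b"
    and D: "(F has_real_derivative D) (at c)" and x: "x \<in> {a..b}"
  shows "F x - F c \<le> D * (x - c)"
proof -
  have cv: "convex_on {a..b} (\<lambda>x. - F x)" using conc by (simp add: concave_on_def)
  have d: "((\<lambda>x. - F x) has_field_derivative - D) (at c within {a..b})"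
    using DERIV_minus[OF has_field_derivative_at_within[OF D]] .
  have ci: "c \<in> interior {a..b}" using c by simp
  have "(- F x) - (- F c) \<ge> - D * (x - c)"
    by (rule convex_on_imp_above_tangent[OF cv connected_Icc ci x d])
  then show ?thesis by simp
qed

lemma concave_three_slope:
  fixes F :: "real \<Rightarrow> real"
  assumes conc: "concave_on {a..b} F" and "a \<le> x" "x < y" "y < z" "z \<le> b"
  shows "(F z - F x) / (z - x) \<le> (F y - F x) / (y - x)"
    and "(F z - F y) / (z - y) \<le> (F z - F x) / (z - x)"
proof -
  have cv: "convex_on {a..b} (\<lambda>x. - F x)" using conc by (simp add: concave_on_def)
  have xI: "x \<in> {a..b}" and zI: "z \<in> {a..b}" using assms by auto
  note L = convex_on_slope_le[OF cv xI zI \<open>x < y\<close> \<open>y < z\<close>]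
  have e1: "(- F x - - F y) / (x - y) = - ((F y - F x) / (y - x))"
    using assms by (simp add: field_simps)
  have e2: "(- F x - - F z) / (x - z) = - ((F z - F x) / (z - x))"
    using assms by (simp add: field_simps)
  have e3: "(- F y - - F z) / (y - z) = - ((F z - F y) / (z - y))"
    using assms by (simp add: field_simps)
  show "(F z - F x) / (z - x) \<le> (F y - F x) / (y - x)" using L(1) e1 e2 by simp
  show "(F z - F y) / (z - y) \<le> (F z - F x) / (z - x)" using L(2) e2 e3 by simp
qed

lemma concave_deriv_mono:
  fixes F :: "real \<Rightarrow> real"
  assumes conc: "concave_on {a..b} F" and "a < x" "x < y" "y < b"
    and Dx: "(F has_real_derivative Dx) (at x)" and Dy: "(F has_real_derivative Dy) (at y)"
  shows "Dy \<le> Dx"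
proof -
  have 1: "F y - F x \<le> Dx * (y - x)"
    by (rule concave_tangent[OF conc _ _ Dx]) (use assms in auto)
  have 2: "F x - F y \<le> Dy * (x - y)"
    by (rule concave_tangent[OF conc _ _ Dy]) (use assms in auto)
  from 1 2 have "Dy * (y - x) \<le> Dx * (y - x)" by (simp add: algebra_simps)
  then show ?thesis using assms by simp
qed

lemma concave_deriv_cont:
  fixes F :: "real \<Rightarrow> real"
  assumes conc: "concave_on {a..b} F" and tau: "a < \<tau>" "\<tau> < b"
    and Dt: "(F has_real_derivative Dt) (at \<tau>)" and e: "e > 0"
  shows "\<exists>d>0. \<forall>s Ds. a < s \<and> s < b \<and> \<bar>s - \<tau>\<bar> < d \<and> (F has_real_derivative Ds) (at s)
            \<longrightarrow> \<bar>Ds - Dt\<bar> \<le> e"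
proof -
  have "(F has_derivative (*) Dt) (at \<tau>)"
    using Dt by (simp add: has_field_derivative_def)
  moreover have "e/3 > 0" using e by simp
  ultimately obtain d0 where d0: "d0 > 0" and H: "\<And>y. norm (y - \<tau>) < d0 \<Longrightarrow>
      norm (F y - F \<tau> - Dt * (y - \<tau>)) \<le> (e/3) * norm (y - \<tau>)"
    unfolding has_derivative_at_alt by blast
  define d where "d = min (d0/2) (min ((b - \<tau>)/2) ((\<tau> - a)/2))"
  have dpos: "d > 0" using d0 tau by (simp add: d_def)
  have key: "\<bar>Ds - Dt\<bar> \<le> e" if s: "a < s" "s < b" "\<bar>s - \<tau>\<bar> < d" and Ds: "(F has_real_derivative Ds) (at s)" for s Ds
  proof (cases "s = \<tau>")
    case True
    then have "Ds = Dt" using Ds Dt DERIV_unique by blast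
    then show ?thesis using e by simp
  next
    case False
    define h where "h = s - \<tau>"
    have h0: "h \<noteq> 0" using False by (simp add: h_def)
    have h1: "\<bar>h\<bar> < d" using s by (simp add: h_def)
    have "2 * s - \<tau> \<in> {a..b}" using h1 s unfolding d_def h_def abs_less_iff by auto
    from concave_tangent[OF conc s(1) s(2) Ds this]
    have T0: "F (2 * s - \<tau>) - F s \<le> Ds * (2 * s - \<tau> - s)" .
    have r1: "2 * s - \<tau> - s = h" "2 * s - \<tau> = \<tau> + 2*h" "s = \<tau> + h" by (simp_all add: h_def)
    have T: "F (\<tau> + 2*h) - F (\<tau> + h) \<le> Ds * h"
    proof -
      have "Ds * (2 * s - \<tau> - s) = Ds*h" by (simp add: h_def)
      moreover have "F (2 * s - \<tau>) = F (\<tau>+2*h)" by (simp add: h_def)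
      moreover have "F s = F (\<tau>+h)" by (simp add: h_def)
      ultimately show ?thesis using T0 by linarith
    qed
    have hd: "\<bar>h\<bar> < d0" "\<bar>2*h\<bar> < d0" using h1 by (auto simp: d_def abs_mult)
    have A1: "\<bar>F (\<tau> + h) - F \<tau> - Dt * h\<bar> \<le> (e/3) * \<bar>h\<bar>"
      using H[of "\<tau> + h"] hd by simp
    have A2: "\<bar>F (\<tau> + 2*h) - F \<tau> - Dt * (2*h)\<bar> \<le> (e/3) * \<bar>2*h\<bar>"
      using H[of "\<tau> + 2*h"] hd by simp
    have eq1: "Dt * (2*h) = 2 * (Dt * h)" by simp
    have eq2: "(e/3) * \<bar>2*h\<bar> = 2 * ((e/3) * \<bar>h\<bar>)" by (simp add: abs_mult)
    have eq3: "e * \<bar>h\<bar> = 3 * ((e/3) * \<bar>h\<bar>)" by simp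
    have low: "Dt * h - e * \<bar>h\<bar> \<le> Ds * h"
      using T A1 A2 unfolding eq1 eq2 eq3 abs_le_iff by linarith
    show ?thesis
    proof (cases "h > 0")
      case True
      have "Ds \<le> Dt" by (rule concave_deriv_mono[OF conc tau(1) _ s(2) Dt Ds]) (use True h_def in auto)
      moreover have "Dt - e \<le> Ds"
      proof -
        have "(Dt - e) * h \<le> Ds * h" using low True by (simp add: algebra_simps)
        then show ?thesis using True by (simp add: mult_le_cancel_right)
      qed
      ultimately show ?thesis by simp
    next
      case False
      then have hn: "h < 0" using h0 by simp
      have "Dt \<le> Ds" by (rule concave_deriv_mono[OF conc s(1) _ tau(2) Ds Dt]) (use hn h_def in auto)
      moreover have "Ds \<le> Dt + e"
      proof -
        have "Dt * h + e * h \<le> Ds * h" using low hn by simp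
        then have "(Dt + e) * h \<le> Ds * h" by (simp add: algebra_simps)
        then show ?thesis using hn by (simp add: mult_le_cancel_right)
      qed
      ultimately show ?thesis by simp
    qed
  qed
  show ?thesis
  proof (intro exI[of _ d] conjI allI impI)
    fix s Ds assume "a < s \<and> s < b \<and> \<bar>s - \<tau>\<bar> < d \<and> (F has_real_derivative Ds) (at s)"
    then show "\<bar>Ds - Dt\<bar> \<le> e" using key by blast
  qed (rule dpos)
qed

lemma concave_diff_countable:
  fixes F :: "real \<Rightarrow> real"
  assumes conc: "concave_on {a..b} F"
  shows "countable {s \<in> {a<..<b}. \<not> F differentiable (at s)}"
proof -
  define sl where "sl x y = (F y - F x) / (y - x)" for x y
  have sl_sym: "sl x y = sl y x" for x y
    unfolding sl_def by (metis minus_diff_eq minus_divide_divide)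
  have up: "sl s y \<le> sl w s" if "a \<le> w" "w < s" "s < y" "y \<le> b" for w s y
    using concave_three_slope[OF conc that] unfolding sl_def by linarith
  have mono3: "sl s y0 \<le> sl s y" if "a \<le> s" "s < y" "y < y0" "y0 \<le> b" for s y y0
    using concave_three_slope(1)[OF conc that] unfolding sl_def by linarith
  define B where "B s = Sup (sl s ` {s<..b})" for s
  have bdd: "bdd_above (sl s ` {s<..b})" if "s \<in> {a<..<b}" for s
    using up[of a s] that by (intro bdd_aboveI2[where M="sl a s"]) auto
  have ne: "sl s ` {s<..b} \<noteq> {}" if "s \<in> {a<..<b}" for s using that by auto
  have Bge: "sl s y \<le> B s" if "s \<in> {a<..<b}" "y \<in> {s<..b}" for s y
    unfolding B_def using bdd[OF that(1)] that(2) by (intro cSup_upper) auto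
  have Ble: "B s \<le> sl w s" if "s \<in> {a<..<b}" "a \<le> w" "w < s" for s w
    unfolding B_def using ne[OF that(1)] that by (intro cSup_least) (auto intro!: up)
  have mono: "mono_on {a<..<b} (\<lambda>s. - B s)"
  proof (rule mono_onI)
    fix s s' assume s: "s \<in> {a<..<b}" and s': "s' \<in> {a<..<b}" and le: "s \<le> s'"
    show "- B s \<le> - B s'"
    proof (cases "s = s'")
      case False
      then have "s < s'" using le by simp
      then have "B s' \<le> sl s s'" using Ble[OF s'] s by auto
      also have "\<dots> \<le> B s" using Bge[OF s] s' \<open>s < s'\<close> by auto
      finally show ?thesis by simp
    qed simp
  qed
  have diff: "F differentiable (at s)" if s: "s \<in> {a<..<b}" and cB: "isCont B s" for s
  proof -
    have "((\<lambda>y. (F y - F s) / (y - s)) \<longlongrightarrow> B s) (at s)"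
      unfolding tendsto_iff
    proof (intro allI impI)
      fix e :: real assume e: "e > 0"
      obtain y0 where y0: "y0 \<in> {s<..b}" and y0e: "B s - e < sl s y0"
        using less_cSup_iff[OF ne[OF s] bdd[OF s], of "B s - e"] e unfolding B_def[symmetric]
        by (auto simp: B_def)
      from cB e obtain \<delta> where \<delta>: "\<delta> > 0" and Hd: "\<And>w. dist w s < \<delta> \<Longrightarrow> dist (B w) (B s) < e"
        unfolding continuous_at_eps_delta by blast
      define d where "d = min \<delta> (min (y0 - s) (s - a))"
      have dpos: "d > 0" using \<delta> y0 s by (simp add: d_def)
      have "dist ((F y - F s) / (y - s)) (B s) < e" if y: "y \<noteq> s" "dist y s < d" for y
      proof (cases "y > s")
        case True
        have "y < y0" using y True by (auto simp: d_def dist_real_def)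
        then have "sl s y0 \<le> sl s y" using mono3[of s y y0] True s y0 by auto
        moreover have "sl s y \<le> B s" using Bge[OF s, of y] True \<open>y < y0\<close> y0 by auto
        ultimately show ?thesis using y0e unfolding sl_def dist_real_def by auto
      next
        case False
        then have ys: "y < s" using y by simp
        have ya: "a < y" using y ys by (auto simp: d_def dist_real_def)
        have "B s \<le> sl y s" using Ble[OF s, of y] ya ys by auto
        moreover have "sl y s \<le> B y" using Bge[of y s] ya ys s by auto
        moreover have "B y < B s + e" using Hd[of y] y by (auto simp: d_def dist_real_def)
        ultimately show ?thesis using sl_sym[of s y] unfolding sl_def dist_real_def by auto
      qed
      then show "\<forall>\<^sub>F y in at s. dist ((F y - F s) / (y - s)) (B s) < e"
        unfolding eventually_at using dpos by blast
    qed
    then have "(F has_real_derivative B s) (at s)"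
      by (simp add: has_field_derivative_iff)
    then show ?thesis using real_differentiable_def by blast
  qed
  have "{s \<in> {a<..<b}. \<not> F differentiable (at s)} \<subseteq> {s \<in> {a<..<b}. \<not> isCont (\<lambda>s. - B s) s}"
  proof safe
    fix s assume s: "s \<in> {a<..<b}" "\<not> F differentiable (at s)" "isCont (\<lambda>s. - B s) s"
    then have "isCont (\<lambda>s. - (- B s)) s" using continuous_minus[OF s(3)] by simp
    then show False using diff s by simp
  qed
  moreover have "countable {s \<in> {a<..<b}. \<not> isCont (\<lambda>s. - B s) s}"
    by (rule mono_on_ctble_discont_open[OF _ mono]) simp
  ultimately show ?thesis using countable_subset by blast
qed

lemma countable_negligible:
  fixes S :: "real set"
  assumes "countable S" shows "negligible S"
proof -
  have "S = \<Union>((\<lambda>x. {x}) ` S)" by auto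
  moreover have "negligible (\<Union>((\<lambda>x. {x}) ` S))"
    by (rule negligible_countable_Union) (use assms in auto)
  ultimately show ?thesis by simp
qed

lemma mcshane:
  fixes u q :: "real \<Rightarrow> real" and D :: "real set"
  assumes ne: "D \<noteq> {}" and L: "\<And>a b. a \<in> D \<Longrightarrow> b \<in> D \<Longrightarrow> \<bar>u a - u b\<bar> \<le> \<bar>q a - q b\<bar>"
  shows "\<And>a. a \<in> D \<Longrightarrow> Inf ((\<lambda>a'. u a' + \<bar>q a' - q a\<bar>) ` D) = u a"
    and "\<And>x y. \<bar>Inf ((\<lambda>a. u a + \<bar>q a - q x\<bar>) ` D) - Inf ((\<lambda>a. u a + \<bar>q a - q y\<bar>) ` D)\<bar> \<le> \<bar>q x - q y\<bar>"
proof -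
  obtain a0 where a0: "a0 \<in> D" using ne by blast
  have bdd: "bdd_below ((\<lambda>a. u a + \<bar>q a - q x\<bar>) ` D)" for x
  proof (rule bdd_belowI2[where m = "u a0 - \<bar>q a0 - q x\<bar>"])
    fix a assume a: "a \<in> D"
    have 1: "\<bar>u a0 - u a\<bar> \<le> \<bar>q a0 - q a\<bar>" using L a0 a by blast
    have 2: "\<bar>q a0 - q a\<bar> \<le> \<bar>q a0 - q x\<bar> + \<bar>q a - q x\<bar>" by (smt (verit))
    show "u a0 - \<bar>q a0 - q x\<bar> \<le> u a + \<bar>q a - q x\<bar>" using 1 2 abs_le_D1[of "u a0 - u a"] by linarith
  qed
  show "Inf ((\<lambda>a'. u a' + \<bar>q a' - q a\<bar>) ` D) = u a" if a: "a \<in> D" for a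
  proof (rule antisym)
    show "Inf ((\<lambda>a'. u a' + \<bar>q a' - q a\<bar>) ` D) \<le> u a"
      using cInf_lower[OF imageI[OF a, of "\<lambda>a'. u a' + \<bar>q a' - q a\<bar>"] bdd[of a]] by simp
    show "u a \<le> Inf ((\<lambda>a'. u a' + \<bar>q a' - q a\<bar>) ` D)"
    proof (rule cInf_greatest)
      show "(\<lambda>a'. u a' + \<bar>q a' - q a\<bar>) ` D \<noteq> {}" using ne by simp
      fix z assume "z \<in> (\<lambda>a'. u a' + \<bar>q a' - q a\<bar>) ` D"
      then obtain a' where a': "a' \<in> D" "z = u a' + \<bar>q a' - q a\<bar>" by blast
      have "\<bar>u a - u a'\<bar> \<le> \<bar>q a - q a'\<bar>" using L a a'(1) by blast
      then show "u a \<le> z" using a'(2) abs_le_D1[of "u a - u a'"] by (simp add: abs_minus_commute)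
    qed
  qed
  have half: "Inf ((\<lambda>a. u a + \<bar>q a - q x\<bar>) ` D) - \<bar>q x - q y\<bar> \<le> Inf ((\<lambda>a. u a + \<bar>q a - q y\<bar>) ` D)" for x y
  proof (rule cInf_greatest)
    show "(\<lambda>a. u a + \<bar>q a - q y\<bar>) ` D \<noteq> {}" using ne by simp
    fix z assume "z \<in> (\<lambda>a. u a + \<bar>q a - q y\<bar>) ` D"
    then obtain a where a: "a \<in> D" "z = u a + \<bar>q a - q y\<bar>" by blast
    have "Inf ((\<lambda>a. u a + \<bar>q a - q x\<bar>) ` D) \<le> u a + \<bar>q a - q x\<bar>"
      using cInf_lower[OF imageI[OF a(1), of "\<lambda>a. u a + \<bar>q a - q x\<bar>"] bdd[of x]] .
    moreover have "\<bar>q a - q x\<bar> \<le> \<bar>q a - q y\<bar> + \<bar>q x - q y\<bar>" by (smt (verit))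
    ultimately show "Inf ((\<lambda>a. u a + \<bar>q a - q x\<bar>) ` D) - \<bar>q x - q y\<bar> \<le> z" using a(2) by linarith
  qed
  show "\<bar>Inf ((\<lambda>a. u a + \<bar>q a - q x\<bar>) ` D) - Inf ((\<lambda>a. u a + \<bar>q a - q y\<bar>) ` D)\<bar> \<le> \<bar>q x - q y\<bar>" for x y
    using half[of x y] half[of y x] by (simp add: abs_minus_commute abs_le_iff)
qed

theorem lemma12:
  fixes t1 x1 t2 x2 b s1 s2 :: real and F \<rho> :: "real \<Rightarrow> real"
  assumes "0 < t1" and "t1 < t2"
    and "x1 / t1 > x2 / t2"
    and "0 \<le> b" and "b \<le> (x2 - x1)\<^sup>2 / (t2 - t1) + x1\<^sup>2 / t1 - x2\<^sup>2 / t2"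
    and feas: "feasible t1 x1 t2 x2 b F \<rho>"
    and minim: "\<And>G \<sigma>. feasible t1 x1 t2 x2 b G \<sigma> \<Longrightarrow> I2 t1 t2 \<rho> \<le> I2 t1 t2 \<sigma>"
    and conc: "concave_on {t1..t2} F"
    and dbound: "\<And>t D. t \<in> {t1..t2} \<Longrightarrow> (F has_real_derivative D) (at t within {t1..t2})
                   \<Longrightarrow> D \<le> F t / t"
    and noninc: "\<And>s t. t1 \<le> s \<Longrightarrow> s \<le> t \<Longrightarrow> t \<le> t2 \<Longrightarrow> \<rho> t \<le> \<rho> s"
    and sub: "t1 \<le> s1" "s1 \<le> s2" "s2 \<le> t2"
    and gzero: "\<And>t. t \<in> {s1..s2} \<Longrightarrow> gfun t1 F \<rho> b t = 0"
  shows "(\<exists>h. abs_cont_on {s1..s2} h \<and>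
            (\<forall>t\<in>{s1..s2}. (F has_real_derivative h t) (at t within {s1..s2})))
       \<and> (\<exists>r. abs_cont_on {s1..s2} r \<and> (\<forall>t\<in>{s1<..<s2}. \<rho> t = r t))"
proof (cases "s1 = s2")
  case True
  have 1: "abs_cont_on {s1..s2} (\<lambda>_. 0)" using True abs_cont_singleton by simp
  have 2: "\<forall>t\<in>{s1..s2}. (F has_real_derivative 0) (at t within {s1..s2})"
    using True by (simp add: has_field_derivative_def has_derivative_within_singleton_iff bounded_linear_mult_right)
  have 3: "abs_cont_on {s1..s2} \<rho>" using True abs_cont_singleton by simp
  have 4: "\<forall>t\<in>{s1<..<s2}. \<rho> t = \<rho> t" by simp
  show ?thesis
    by (intro conjI exI[of _ "\<lambda>_. 0"] exI[of _ \<rho>] 1 2 3 4)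
next
  case False
  then have s12: "s1 < s2" using sub by simp
  have t1pos: "0 < t1" by fact
  have Fac: "abs_cont_on {t1..t2} F" using feas unfolding feasible_def by blast
  have Fcont: "continuous_on {t1..t2} F" by (rule abs_cont_imp_continuous[OF Fac])
  define \<phi> where "\<phi> = (\<lambda>\<tau>. \<rho> \<tau> - (deriv F \<tau>)\<^sup>2)"
  have phi_si: "set_integrable lebesgue {t1..t2} \<phi>" using feas unfolding feasible_def \<phi>_def by blast
  have phi_int: "\<phi> integrable_on {t1..t2}" using set_lebesgue_integral_eq_integral(1)[OF phi_si] .
  have G_eq: "(LINT \<tau>:{t1..t}|lebesgue. \<rho> \<tau> - (deriv F \<tau>)\<^sup>2) = integral {t1..t} \<phi>" if "t \<in> {t1..t2}" for t
  proof -
    have "set_integrable lebesgue {t1..t} \<phi>"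
      by (rule set_integrable_subset[OF phi_si]) (use that in auto)
    from set_lebesgue_integral_eq_integral(2)[OF this] show ?thesis by (simp add: \<phi>_def)
  qed
  define c where "c = b - (F t1)\<^sup>2 / t1"
  have gz: "c + integral {t1..t} \<phi> + (F t)\<^sup>2 / t = 0" if "t \<in> {s1..s2}" for t
  proof -
    have "t \<in> {t1..t2}" using that sub by auto
    then show ?thesis using gzero[OF that] G_eq[of t] unfolding gfun_def c_def by simp
  qed
  define E1 where "E1 = {s \<in> {t1<..<t2}. \<not> F differentiable (at s)}"
  have E1c: "countable E1" unfolding E1_def by (rule concave_diff_countable[OF conc])
  define E2 where "E2 = {s \<in> {t1<..<t2}. \<not> isCont \<rho> s}"
  have E2c: "countable E2"
  proof -
    have m: "mono_on {t1<..<t2} (\<lambda>s. - \<rho> s)"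
    proof (rule mono_onI)
      fix r s assume "r \<in> {t1<..<t2}" "s \<in> {t1<..<t2}" "r \<le> s"
      then show "- \<rho> r \<le> - \<rho> s" using noninc[of r s] by simp
    qed
    have "countable {s \<in> {t1<..<t2}. \<not> isCont (\<lambda>s. - \<rho> s) s}"
      by (rule mono_on_ctble_discont_open[OF _ m]) simp
    moreover have "E2 \<subseteq> {s \<in> {t1<..<t2}. \<not> isCont (\<lambda>s. - \<rho> s) s}"
    proof safe
      fix s assume s: "s \<in> E2" "isCont (\<lambda>s. - \<rho> s) s"
      then have "isCont (\<lambda>s. - (- \<rho> s)) s" using continuous_minus[OF s(2)] by simp
      then show False using s(1) unfolding E2_def by simp
    qed (auto simp: E2_def)
    ultimately show ?thesis using countable_subset by blast
  qed
  define D where "D = {s1<..<s2} - E1 - E2"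
  define u where "u = deriv F"
  define q where "q = (\<lambda>x. F x / x)"
  have Dsub: "D \<subseteq> {s1<..<s2}" unfolding D_def by blast
  have Dderiv: "(F has_real_derivative u s) (at s)" if "s \<in> D" for s
  proof -
    have "s \<in> {t1<..<t2}" using that sub unfolding D_def by auto
    then have "F differentiable (at s)" using that unfolding D_def E1_def by auto
    then show ?thesis unfolding u_def using DERIV_deriv_iff_real_differentiable by blast
  qed
  have negl: "negligible (E1 \<union> {t1, t2})"
    by (rule countable_negligible) (use E1c in simp)

  have KEY: "\<rho> \<tau> = (q \<tau> - u \<tau>)\<^sup>2 \<and> u \<tau> \<le> q \<tau>" if tD: "\<tau> \<in> D" for \<tau>
  proof -
    have tI: "t1 < \<tau>" "\<tau> < t2" "s1 < \<tau>" "\<tau> < s2" using tD sub unfolding D_def by auto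
    have Dt: "(F has_real_derivative u \<tau>) (at \<tau>)" by (rule Dderiv[OF tD])
    have rc: "isCont \<rho> \<tau>" using tD tI unfolding D_def E2_def by auto
    define good where "good = (\<lambda>s. s \<in> {t1<..<t2} - E1)"
    define R where "R = (\<lambda>s. if good s then \<rho> s else \<rho> \<tau>)"
    define U where "U = (\<lambda>s. if good s then u s else u \<tau>)"
    define \<psi> where "\<psi> = (\<lambda>s. R s - (U s)\<^sup>2)"
    have gt: "good \<tau>" using tD tI unfolding good_def D_def by auto
    have good_deriv: "(F has_real_derivative u s) (at s)" if "good s" for s
      using that unfolding good_def E1_def u_def using DERIV_deriv_iff_real_differentiable by auto
    have psiphi: "\<psi> s = \<phi> s" if "s \<in> {t1..t2} - (E1 \<union> {t1, t2})" for s
      using that unfolding \<psi>_def R_def U_def \<phi>_def good_def u_def by auto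
    have psi_int: "\<psi> integrable_on {t1..t2}"
      by (rule integrable_spike[OF phi_int negl]) (use psiphi in auto)
    have intEq: "integral {t1..t} \<phi> = integral {t1..t} \<psi>" if "t \<in> {t1..t2}" for t
      by (rule integral_spike[OF negl]) (use psiphi that in auto)
    have Rlim: "(R \<longlongrightarrow> \<rho> \<tau>) (at \<tau>)"
      unfolding tendsto_iff
    proof (intro allI impI)
      fix e :: real assume e: "e > 0"
      have "\<forall>\<^sub>F s in at \<tau>. dist (\<rho> s) (\<rho> \<tau>) < e"
        using rc e unfolding isCont_def tendsto_iff by blast
      then show "\<forall>\<^sub>F s in at \<tau>. dist (R s) (\<rho> \<tau>) < e"
        by (rule eventually_mono) (use e in \<open>auto simp: R_def\<close>)
    qed
    have Ulim: "(U \<longlongrightarrow> u \<tau>) (at \<tau>)"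
      unfolding tendsto_iff
    proof (intro allI impI)
      fix e :: real assume e: "e > 0"
      obtain d where d: "d > 0" and H: "\<forall>s Ds. t1 < s \<and> s < t2 \<and> \<bar>s - \<tau>\<bar> < d \<and> (F has_real_derivative Ds) (at s)
            \<longrightarrow> \<bar>Ds - u \<tau>\<bar> \<le> e/2"
        using concave_deriv_cont[OF conc tI(1) tI(2) Dt, of "e/2"] e by auto
      have "dist (U s) (u \<tau>) < e" if "s \<noteq> \<tau>" "dist s \<tau> < d" for s
      proof (cases "good s")
        case True
        then have "\<bar>u s - u \<tau>\<bar> \<le> e/2" using H good_deriv[OF True] that unfolding good_def dist_real_def by auto
        then show ?thesis using True e by (simp add: U_def dist_real_def)
      next
        case False
        then show ?thesis using e by (simp add: U_def)
      qed
      then show "\<forall>\<^sub>F s in at \<tau>. dist (U s) (u \<tau>) < e"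
        unfolding eventually_at using d by blast
    qed
    have psit: "\<psi> \<tau> = \<rho> \<tau> - (u \<tau>)\<^sup>2" using gt by (simp add: \<psi>_def R_def U_def)
    have psilim: "(\<psi> \<longlongrightarrow> \<psi> \<tau>) (at \<tau>)"
      unfolding psit unfolding \<psi>_def by (intro tendsto_intros Rlim Ulim)
    have psicont: "continuous (at \<tau> within {t1..t2}) \<psi>"
      unfolding continuous_within by (rule tendsto_mono[OF at_le psilim]) simp
    have Gd: "((\<lambda>x. integral {t1..x} \<psi>) has_real_derivative \<psi> \<tau>) (at \<tau> within {t1..t2})"
      using integral_has_vector_derivative_continuous_at[OF psi_int, of \<tau> "{}"] psicont tI
      by (simp add: has_real_derivative_iff_has_vector_derivative)
    have Gd2: "((\<lambda>x. integral {t1..x} \<psi>) has_real_derivative \<psi> \<tau>) (at \<tau> within {s1..s2})"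
      by (rule DERIV_subset[OF Gd]) (use sub in auto)
    have Hd1: "((\<lambda>x. - c - integral {t1..x} \<psi>) has_real_derivative 0 - \<psi> \<tau>) (at \<tau> within {s1..s2})"
      by (rule DERIV_diff[OF DERIV_const Gd2])
    have Hd2: "((\<lambda>x. (F x)\<^sup>2 / x) has_real_derivative 0 - \<psi> \<tau>) (at \<tau> within {s1..s2})"
    proof (rule has_field_derivative_transform_within[OF Hd1 zero_less_one])
      show "\<tau> \<in> {s1..s2}" using tI by auto
      fix x assume x: "x \<in> {s1..s2}"
      then have "x \<in> {t1..t2}" using sub by auto
      then show "- c - integral {t1..x} \<psi> = (F x)\<^sup>2 / x" using gz[OF x] intEq[of x] by simp
    qed
    have Hd3: "((\<lambda>x. (F x)\<^sup>2 / x) has_real_derivative 0 - \<psi> \<tau>) (at \<tau>)"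
      using Hd2 at_within_Icc_at[OF tI(3) tI(4)] by simp
    have tpos: "\<tau> > 0" using tI t1pos by simp
    have tne: "\<tau> \<noteq> 0" using tpos by simp
    note Hd4 = DERIV_divide[OF DERIV_power[OF Dt, of 2] DERIV_ident tne]
    note eq = DERIV_unique[OF Hd3 Hd4]
    have eq': "u \<tau> * u \<tau> - \<rho> \<tau> = (2 * (u \<tau> * F \<tau>) * \<tau> - F \<tau> * F \<tau>) / (\<tau> * \<tau>)"
      using eq psit by (simp add: power2_eq_square)
    have "\<rho> \<tau> = u \<tau> * u \<tau> - (2 * (u \<tau> * F \<tau>) * \<tau> - F \<tau> * F \<tau>) / (\<tau> * \<tau>)"
      using eq' by linarith
    also have "\<dots> = (q \<tau> - u \<tau>)\<^sup>2"
      using tpos by (simp add: q_def field_simps power2_eq_square)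
    finally have 1: "\<rho> \<tau> = (q \<tau> - u \<tau>)\<^sup>2" .
    have "u \<tau> \<le> F \<tau> / \<tau>"
      by (rule dbound[OF _ has_field_derivative_at_within[OF Dt]]) (use tI in auto)
    then show ?thesis using 1 by (simp add: q_def)
  qed

  have DENSE: "{\<alpha>..\<beta>} \<subseteq> closure (D \<inter> {\<alpha><..<\<beta>})" if ab: "s1 \<le> \<alpha>" "\<alpha> < \<beta>" "\<beta> \<le> s2" for \<alpha> \<beta>
  proof
    fix x assume x: "x \<in> {\<alpha>..\<beta>}"
    show "x \<in> closure (D \<inter> {\<alpha><..<\<beta>})" unfolding closure_approachable
    proof (intro allI impI)
      fix e :: real assume e: "e > 0"
      define \<alpha>' where "\<alpha>' = max \<alpha> (x - e)"
      define \<beta>' where "\<beta>' = min \<beta> (x + e)"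
      have ab': "\<alpha>' < \<beta>'" using x e ab by (auto simp: \<alpha>'_def \<beta>'_def)
      have "\<not> ({\<alpha>'<..<\<beta>'} \<subseteq> E1 \<union> E2)"
      proof
        assume "{\<alpha>'<..<\<beta>'} \<subseteq> E1 \<union> E2"
        moreover have "countable (E1 \<union> E2)" using E1c E2c by simp
        ultimately have "countable {\<alpha>'<..<\<beta>'}" using countable_subset by blast
        then show False using uncountable_open_interval[of \<alpha>' \<beta>'] ab' by simp
      qed
      then obtain y where y: "y \<in> {\<alpha>'<..<\<beta>'}" "y \<notin> E1" "y \<notin> E2" by blast
      have "y \<in> D \<inter> {\<alpha><..<\<beta>}" using y ab unfolding D_def \<alpha>'_def \<beta>'_def by auto
      moreover have "dist y x < e" using y unfolding \<alpha>'_def \<beta>'_def dist_real_def by auto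
      ultimately show "\<exists>y\<in>D \<inter> {\<alpha><..<\<beta>}. dist y x < e" by blast
    qed
  qed
  have DD: "D \<inter> {s1<..<s2} = D" using Dsub by blast
  have clD: "{s1..s2} \<subseteq> closure D" using DENSE[OF order_refl s12 order_refl] DD by simp
  have Dne: "D \<noteq> {}" using clD s12 by auto
  have clsub: "closure S \<subseteq> {s1..s2}" if "S \<subseteq> D" for S
    by (rule closure_minimal) (use that Dsub in auto)

  have MONO: "\<bar>u a - u b\<bar> \<le> \<bar>q a - q b\<bar>" if "a \<in> D" "b \<in> D" for a b
  proof -
    have gen: "\<bar>u a - u b\<bar> \<le> \<bar>q a - q b\<bar>" if ab: "a \<in> D" "b \<in> D" "a < b" for a b
    proof -
      have I: "t1 < a" "b < t2" using ab Dsub sub by auto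
      have ub: "u b \<le> u a"
        by (rule concave_deriv_mono[OF conc I(1) ab(3) I(2) Dderiv[OF ab(1)] Dderiv[OF ab(2)]])
      have "\<rho> b \<le> \<rho> a" using noninc[of a b] ab I by auto
      moreover have k1: "\<rho> a = (q a - u a)\<^sup>2" "u a \<le> q a" using KEY[OF ab(1)] by blast+
      moreover have k2: "\<rho> b = (q b - u b)\<^sup>2" using KEY[OF ab(2)] by blast
      ultimately have "(q b - u b)\<^sup>2 \<le> (q a - u a)\<^sup>2" by (simp only: k1 k2)
      then have "q b - u b \<le> q a - u a" by (rule power2_le_imp_le) (use k1(2) in simp)
      then have "u a - u b \<le> q a - q b" by linarith
      then show ?thesis using ub abs_ge_self[of "q a - q b"] by (simp add: abs_of_nonneg)
    qed
    show ?thesis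
    proof (cases a b rule: linorder_cases)
      case less then show ?thesis using gen that by blast
    next
      case equal then show ?thesis by simp
    next
      case greater then show ?thesis using gen[of b a] that by (simp add: abs_minus_commute)
    qed
  qed
  define hh where "hh = (\<lambda>x. Inf ((\<lambda>a. u a + \<bar>q a - q x\<bar>) ` D))"
  have hhD: "hh a = u a" if "a \<in> D" for a
    using mcshane(1)[OF Dne MONO that] unfolding hh_def .
  have hhL: "\<bar>hh x - hh y\<bar> \<le> \<bar>q x - q y\<bar>" for x y
    using mcshane(2)[OF Dne MONO] unfolding hh_def .

  obtain M where M: "M > 0" "\<And>x. x \<in> {t1..t2} \<Longrightarrow> \<bar>F x\<bar> \<le> M"
    using compact_imp_bounded[OF compact_continuous_image[OF Fcont compact_Icc]]
    unfolding bounded_pos by auto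
  have qle: "\<bar>q x - q y\<bar> \<le> (1/t1) * \<bar>F x - F y\<bar> + (M/t1\<^sup>2) * \<bar>x - y\<bar>"
    if x: "x \<in> {t1..t2}" and y: "y \<in> {t1..t2}" for x y
  proof -
    have xp: "x \<ge> t1" "y \<ge> t1" using x y by auto
    have xpos: "x > 0" "y > 0" using xp t1pos by linarith+
    have e: "q x - q y = (F x - F y) / x + F y * (y - x) / (x * y)"
      using xpos by (simp add: q_def field_simps)
    have a1: "\<bar>(F x - F y) / x\<bar> \<le> (1/t1) * \<bar>F x - F y\<bar>"
    proof -
      have "\<bar>(F x - F y) / x\<bar> = \<bar>F x - F y\<bar> / x" using xpos by simp
      also have "\<dots> \<le> \<bar>F x - F y\<bar> / t1"
        by (rule divide_left_mono) (use xp xpos t1pos in auto)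
      finally show ?thesis by simp
    qed
    have a2: "\<bar>F y * (y - x) / (x * y)\<bar> \<le> (M/t1\<^sup>2) * \<bar>x - y\<bar>"
    proof -
      have "\<bar>F y * (y - x) / (x * y)\<bar> = \<bar>F y\<bar> * \<bar>x - y\<bar> / (x * y)"
        using xpos by (simp add: abs_mult abs_minus_commute)
      also have "\<dots> \<le> M * \<bar>x - y\<bar> / (t1 * t1)"
      proof (rule frac_le)
        show "\<bar>F y\<bar> * \<bar>x - y\<bar> \<le> M * \<bar>x - y\<bar>" using M(2)[OF y] by (simp add: mult_right_mono)
        show "t1 * t1 \<le> x * y" using xp t1pos by (intro mult_mono) auto
      qed (use M t1pos in auto)
      finally show ?thesis by (simp add: power2_eq_square)
    qed
    show ?thesis using e a1 a2 abs_triangle_ineq[of "(F x - F y) / x" "F y * (y - x) / (x * y)"] by linarith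
  qed
  have FacS: "abs_cont_on {s1..s2} F" using abs_cont_on_subset[OF Fac] sub by auto
  have qac: "abs_cont_on {s1..s2} q"
    by (rule abs_cont_on_dominated[OF FacS, of "1/t1" "M/t1\<^sup>2"]) (use qle sub t1pos M in auto)
  have qcont: "continuous_on {s1..s2} q" by (rule abs_cont_imp_continuous[OF qac])
  have hhac: "abs_cont_on {s1..s2} hh"
    by (rule abs_cont_on_dominated[OF qac, of 1 0]) (use hhL in auto)
  have hhcont: "continuous_on {s1..s2} hh" by (rule abs_cont_imp_continuous[OF hhac])
  have FcontS: "continuous_on {s1..s2} F" by (rule continuous_on_subset[OF Fcont]) (use sub in auto)

  have TAN: "F x - F c \<le> hh c * (x - c)" if c: "c \<in> {s1..s2}" and x: "x \<in> {s1..s2}" for c x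
  proof -
    have "0 \<le> (\<lambda>c. hh c * (x - c) - (F x - F c)) c"
    proof (rule continuous_ge_on_closure[where S = D and f = "\<lambda>c. hh c * (x - c) - (F x - F c)" and a = 0])
      have "continuous_on {s1..s2} (\<lambda>c. hh c * (x - c) - (F x - F c))"
        by (intro continuous_intros hhcont FcontS)
      then show "continuous_on (closure D) (\<lambda>c. hh c * (x - c) - (F x - F c))"
        by (rule continuous_on_subset) (rule clsub, simp)
      show "c \<in> closure D" using clD c by auto
      fix y assume y: "y \<in> D"
      have "F x - F y \<le> u y * (x - y)"
        by (rule concave_tangent[OF conc _ _ Dderiv[OF y]]) (use y x sub Dsub in auto)
      then show "0 \<le> hh y * (x - y) - (F x - F y)" using hhD[OF y] by simp
    qed
    then show ?thesis by simp
  qed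
  have HD: "(F has_real_derivative hh x) (at x within {s1..s2})" if x: "x \<in> {s1..s2}" for x
  proof -
    have bnd: "\<bar>(F y - F x) / (y - x) - hh x\<bar> \<le> \<bar>hh y - hh x\<bar>" if y: "y \<in> {s1..s2}" "y \<noteq> x" for y
    proof -
      have 1: "F y - F x \<le> hh x * (y - x)" using TAN[OF x y(1)] .
      have 2: "F x - F y \<le> hh y * (x - y)" using TAN[OF y(1) x] .
      show ?thesis
      proof (cases "y > x")
        case True
        then have "(F y - F x) / (y - x) \<le> hh x" using 1 by (simp add: pos_divide_le_eq)
        moreover have "hh y \<le> (F y - F x) / (y - x)" using 2 True
          by (simp add: pos_le_divide_eq algebra_simps)
        ultimately show ?thesis by (simp add: abs_le_iff)
      next
        case False
        then have yx: "y < x" using y by simp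
        then have "hh x \<le> (F y - F x) / (y - x)" using 1 by (simp add: neg_le_divide_eq)
        moreover have "(F y - F x) / (y - x) \<le> hh y" using 2 yx
          by (simp add: neg_divide_le_eq algebra_simps)
        ultimately show ?thesis by (simp add: abs_le_iff)
      qed
    qed
    have "((\<lambda>y. (F y - F x) / (y - x)) \<longlongrightarrow> hh x) (at x within {s1..s2})"
      unfolding tendsto_iff
    proof (intro allI impI)
      fix e :: real assume e: "e > 0"
      obtain d where d: "d > 0" "\<And>y. y \<in> {s1..s2} \<Longrightarrow> dist y x < d \<Longrightarrow> dist (hh y) (hh x) < e"
        using hhcont x e unfolding continuous_on_iff by metis
      have "dist ((F y - F x) / (y - x)) (hh x) < e" if "y \<in> {s1..s2}" "y \<noteq> x" "dist y x < d" for y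
        using bnd[OF that(1,2)] d(2)[OF that(1,3)] by (simp add: dist_real_def)
      then show "\<forall>\<^sub>F y in at x within {s1..s2}. dist ((F y - F x) / (y - x)) (hh x) < e"
        unfolding eventually_at using d(1) by blast
    qed
    then show ?thesis by (simp add: has_field_derivative_iff)
  qed

  define kk where "kk = (\<lambda>x. q x - hh x)"
  define r where "r = (\<lambda>x. (kk x)\<^sup>2)"
  have kkD: "\<rho> a = r a" if "a \<in> D" for a using KEY[OF that] hhD[OF that] by (simp add: r_def kk_def)
  have kkcont: "continuous_on {s1..s2} kk" unfolding kk_def by (intro continuous_intros qcont hhcont)
  have rcont: "continuous_on {s1..s2} r" unfolding r_def by (intro continuous_intros kkcont)
  have RHO: "\<rho> t = r t" if t: "t \<in> {s1<..<s2}" for t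
  proof -
    have le1: "\<rho> t \<le> r t"
    proof -
      have "0 \<le> (\<lambda>x. r x - \<rho> t) t"
      proof (rule continuous_ge_on_closure[where S = "D \<inter> {s1<..<t}" and f = "\<lambda>x. r x - \<rho> t" and a = 0])
        have "continuous_on {s1..s2} (\<lambda>x. r x - \<rho> t)" by (intro continuous_intros rcont)
        then show "continuous_on (closure (D \<inter> {s1<..<t})) (\<lambda>x. r x - \<rho> t)"
          by (rule continuous_on_subset) (rule clsub, simp)
        show "t \<in> closure (D \<inter> {s1<..<t})" using DENSE[of s1 t] t by auto
        fix a assume a: "a \<in> D \<inter> {s1<..<t}"
        have "\<rho> t \<le> \<rho> a" using noninc[of a t] a t sub by auto
        then show "0 \<le> r a - \<rho> t" using kkD a by auto
      qed
      then show ?thesis by simp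
    qed
    have le2: "r t \<le> \<rho> t"
    proof -
      have "0 \<le> (\<lambda>x. \<rho> t - r x) t"
      proof (rule continuous_ge_on_closure[where S = "D \<inter> {t<..<s2}" and f = "\<lambda>x. \<rho> t - r x" and a = 0])
        have "continuous_on {s1..s2} (\<lambda>x. \<rho> t - r x)" by (intro continuous_intros rcont)
        then show "continuous_on (closure (D \<inter> {t<..<s2})) (\<lambda>x. \<rho> t - r x)"
          by (rule continuous_on_subset) (rule clsub, simp)
        show "t \<in> closure (D \<inter> {t<..<s2})" using DENSE[of t s2] t by auto
        fix a assume a: "a \<in> D \<inter> {t<..<s2}"
        have "\<rho> a \<le> \<rho> t" using noninc[of t a] a t sub by auto
        then show "0 \<le> \<rho> t - r a" using kkD a by auto
      qed
      then show ?thesis by simp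
    qed
    show ?thesis using le1 le2 by simp
  qed
  obtain K where K: "K > 0" "\<And>x. x \<in> {s1..s2} \<Longrightarrow> \<bar>kk x\<bar> \<le> K"
    using compact_imp_bounded[OF compact_continuous_image[OF kkcont compact_Icc]]
    unfolding bounded_pos by auto
  have rac: "abs_cont_on {s1..s2} r"
  proof (rule abs_cont_on_dominated[OF qac, of "4 * K" 0])
    fix x y assume x: "x \<in> {s1..s2}" and y: "y \<in> {s1..s2}"
    have "\<bar>r x - r y\<bar> = \<bar>kk x - kk y\<bar> * \<bar>kk x + kk y\<bar>"
      unfolding r_def by (simp add: power2_eq_square abs_mult[symmetric] algebra_simps)
    also have "\<dots> \<le> (2 * \<bar>q x - q y\<bar>) * (2 * K)"
    proof (rule mult_mono)
      show "\<bar>kk x - kk y\<bar> \<le> 2 * \<bar>q x - q y\<bar>"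
        using hhL[of x y] abs_triangle_ineq4[of "q x - q y" "hh x - hh y"] unfolding kk_def
        by (simp add: algebra_simps)
      show "\<bar>kk x + kk y\<bar> \<le> 2 * K"
        using K(2)[OF x] K(2)[OF y] abs_triangle_ineq[of "kk x" "kk y"] by linarith
    qed (use K in auto)
    finally show "\<bar>r x - r y\<bar> \<le> 4 * K * \<bar>q x - q y\<bar> + 0 * \<bar>x - y\<bar>" by (simp add: mult_ac)
  qed (use K in auto)
  have P1: "\<exists>h. abs_cont_on {s1..s2} h \<and> (\<forall>t\<in>{s1..s2}. (F has_real_derivative h t) (at t within {s1..s2}))"
    using hhac HD by blast
  have P2: "\<exists>r. abs_cont_on {s1..s2} r \<and> (\<forall>t\<in>{s1<..<s2}. \<rho> t = r t)"
    using rac RHO by blast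
  show ?thesis using P1 P2 by (rule conjI)
qed

end
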